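(* Let $\mathcal{X}=\{1,\ldots,n\}$, let $p$ be a probability vector on $\mathcal{X}$ with all entries positive (the prior of $X$), with entries in non-increasing order $p_{[1]}\geq p_{[2]}\geq\cdots\geq p_{[n]}$, let $k<n$ be a positive integer and $l$ an integer with $1\leq l<k$. Then the maximum over all feasible channels of the posterior $l$-guess-error probability $H(X\mid Y)=\sum_{y:\,p(y)>0}p(y)\big(1-\sum_{i=1}^{l}(p_{X\mid y})_{[i]}\big)$ equals $$1-\max_{0\leq j\leq l}\Big\{\sum_{i=1}^{j}p_{[i]}+\Big(1-\sum_{i=1}^{j}p_{[i]}\Big)\frac{l-j}{k-j}\Big\}.$$
   Context: $q_{[i]}$ denotes the $i$-th largest entry of a vector $q$, and $p_{X\mid y}=(p(x\mid y))_{x\in\mathcal{X}}$. A channel is a discrete output set $\mathcal{Y}$ with conditional probabilities $p(y\mid x)\geq0$, $\sum_y p(y\mid x)=1$; $Y$ is its output when the input is $X\sim p$, with $p(y)=\sum_x p(x)p(y\mid x)$ and $p(x\mid y)=p(x)p(y\mid x)/p(y)$. The pre-image of $y$ is $\{x:p(y\mid x)>0\}$; the channel is feasible if every pre-image has at most $k$ elements. *)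

theory Defs
  imports "HOL-Analysis.Analysis"
begin

text \<open>Channels have output set nat (any discrete output set
with countably many used outputs embeds into nat); W x y = p(y|x).\<close>

definition top_sum :: "nat \<Rightarrow> nat \<Rightarrow> (nat \<Rightarrow> real) \<Rightarrow> real" where
  "top_sum n l q = sum_list (take l (rev (sort (map q [1..<Suc n]))))"

definition is_channel :: "nat \<Rightarrow> (nat \<Rightarrow> nat \<Rightarrow> real) \<Rightarrow> bool" where
  "is_channel n W \<longleftrightarrow> (\<forall>x\<in>{1..n}. (\<forall>y. W x y \<ge> 0) \<and> ((\<lambda>y. W x y) has_sum 1) UNIV)"

definition feasible :: "nat \<Rightarrow> nat \<Rightarrow> (nat \<Rightarrow> nat \<Rightarrow> real) \<Rightarrow> bool" where
  "feasible n k W \<longleftrightarrow> (\<forall>y. card {x\<in>{1..n}. W x y > 0} \<le> k)"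

definition out_prob :: "nat \<Rightarrow> (nat \<Rightarrow> real) \<Rightarrow> (nat \<Rightarrow> nat \<Rightarrow> real) \<Rightarrow> nat \<Rightarrow> real" where
  "out_prob n p W y = (\<Sum>x\<in>{1..n}. p x * W x y)"

definition posterior :: "nat \<Rightarrow> (nat \<Rightarrow> real) \<Rightarrow> (nat \<Rightarrow> nat \<Rightarrow> real) \<Rightarrow> nat \<Rightarrow> nat \<Rightarrow> real" where
  "posterior n p W y x = p x * W x y / out_prob n p W y"

definition guess_err :: "nat \<Rightarrow> nat \<Rightarrow> (nat \<Rightarrow> real) \<Rightarrow> (nat \<Rightarrow> nat \<Rightarrow> real) \<Rightarrow> real" where
  "guess_err n l p W = infsum (\<lambda>y. out_prob n p W y * (1 - top_sum n l (posterior n p W y)))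
                          {y. out_prob n p W y > 0}"

definition max_val :: "nat \<Rightarrow> nat \<Rightarrow> nat \<Rightarrow> (nat \<Rightarrow> real) \<Rightarrow> real" where
  "max_val n k l p = 1 - Max ((\<lambda>j. top_sum n j p + (1 - top_sum n j p) * (real l - real j) / (real k - real j)) ` {0..l})"

end

theory Submission
  imports Defs
begin


lemma top_sum_char:
  "\<exists>T. T \<subseteq> {1..n} \<and> card T = min l n \<and> top_sum n l q = sum q T \<and>
       (\<forall>x\<in>T. \<forall>z\<in>{1..n}-T. q z \<le> q x)"
proof -
  define zs where "zs = sort_key q [1..<Suc n]"
  define L where "L = rev zs"
  have srt: "sort (map q [1..<Suc n]) = map q zs"
    unfolding zs_def by (rule properties_for_sort) (simp_all add: mset_map)
  have dL: "distinct L" and sL: "set L = {1..n}" and lenL: "length L = n"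
    by (auto simp: L_def zs_def)
  have sortedL: "sorted_wrt (\<lambda>x y. q y \<le> q x) L"
  proof -
    have "sorted (map q zs)" unfolding zs_def by simp
    then have "sorted_wrt (\<lambda>x y. q x \<le> q y) zs" by (simp add: sorted_wrt_map)
    then show ?thesis by (simp add: L_def sorted_wrt_rev)
  qed
  define T where "T = set (take l L)"
  have ts: "top_sum n l q = sum q T"
  proof -
    have "take l (rev (map q zs)) = map q (take l L)" by (simp add: L_def rev_map take_map)
    moreover have "distinct (take l L)" using dL by simp
    ultimately show ?thesis unfolding top_sum_def srt T_def
      by (simp add: sum_list_distinct_conv_sum_set)
  qed
  have "T \<subseteq> {1..n}" unfolding T_def using sL set_take_subset by metis
  moreover have "card T = min l n" unfolding T_def using dL lenL by (simp add: distinct_card)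
  moreover have "\<forall>x\<in>T. \<forall>z\<in>{1..n}-T. q z \<le> q x"
  proof (intro ballI)
    fix x z assume x: "x \<in> T" and z: "z \<in> {1..n} - T"
    have L2: "L = take l L @ drop l L" by simp
    have "z \<in> set (drop l L)" using z sL T_def L2
      by (metis DiffE Un_iff set_append)
    moreover have "sorted_wrt (\<lambda>x y. q y \<le> q x) (take l L @ drop l L)" using sortedL by simp
    ultimately show "q z \<le> q x" using x unfolding T_def sorted_wrt_append by blast
  qed
  ultimately show ?thesis using ts by blast
qed

lemma dom_max:
  fixes f :: "nat \<Rightarrow> real"
  assumes N: "finite N" and TN: "T \<subseteq> N" and dom: "\<forall>x\<in>T. \<forall>z\<in>N-T. f z \<le> f x"
    and T'N: "T' \<subseteq> N" and cT: "card T' \<le> card T" and nn: "\<forall>x\<in>N. 0 \<le> f x"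
  shows "sum f T' \<le> sum f T"
proof -
  have fT: "finite T" "finite T'" using N TN T'N finite_subset by auto
  have e1: "sum f T' = sum f (T'\<inter>T) + sum f (T'-T)" using fT by (simp add: sum.Int_Diff)
  have e2: "sum f T = sum f (T'\<inter>T) + sum f (T-T')" using fT
    by (metis Int_commute sum.Int_Diff)
  have c1: "card (T'-T) = card T' - card (T'\<inter>T)" using fT by (simp add: card_Diff_subset_Int)
  have c2: "card (T-T') = card T - card (T'\<inter>T)" using fT
    by (metis Int_commute card_Diff_subset_Int finite_Int)
  have cc: "card (T'-T) \<le> card (T-T')" using c1 c2 cT by linarith
  have "sum f (T'-T) \<le> sum f (T-T')"
  proof (cases "T'-T = {}")
    case True
    have "0 \<le> sum f (T-T')" using nn TN by (intro sum_nonneg) auto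
    moreover have "sum f (T'-T) = 0" using True by (metis sum.empty)
    ultimately show ?thesis by simp
  next
    case False
    define M where "M = Max (f ` (T'-T))"
    have fin: "finite (T'-T)" using fT by simp
    have "M \<in> f ` (T'-T)" unfolding M_def using Max_in[of "f ` (T'-T)"] fin False by auto
    then obtain z where z: "z \<in> T'-T" "f z = M" by auto
    have M0: "0 \<le> M" using z nn T'N by auto
    have "sum f (T'-T) \<le> of_nat (card (T'-T)) * M"
      by (rule sum_bounded_above) (simp add: M_def fin)
    also have "\<dots> \<le> of_nat (card (T-T')) * M" using cc M0 by (simp add: mult_right_mono)
    also have "\<dots> \<le> sum f (T-T')"
    proof (rule sum_bounded_below)
      fix x assume "x \<in> T - T'"
      then show "M \<le> f x" using dom z T'N by auto
    qed
    finally show ?thesis .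
  qed
  then show ?thesis using e1 e2 by linarith
qed

lemma top_sum_ge:
  fixes q :: "nat \<Rightarrow> real"
  assumes "\<forall>x\<in>{1..n}. 0 \<le> q x" "T \<subseteq> {1..n}" "card T \<le> l"
  shows "sum q T \<le> top_sum n l q"
proof -
  obtain T0 where T0: "T0 \<subseteq> {1..n}" "card T0 = min l n" "top_sum n l q = sum q T0"
     "\<forall>x\<in>T0. \<forall>z\<in>{1..n}-T0. q z \<le> q x" using top_sum_char by blast
  have "card T \<le> n" using assms(2) by (metis card_atLeastAtMost card_mono diff_Suc_1 finite_atLeastAtMost)
  then have "card T \<le> card T0" using T0(2) assms(3) by simp
  then show ?thesis using dom_max[OF _ T0(1) T0(4) assms(2) _ assms(1)] T0(3) by simp
qed

lemma top_sum_le: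
  "\<exists>T. T \<subseteq> {1..n} \<and> card T \<le> l \<and> top_sum n l q = sum q T"
  using top_sum_char[of n l q] by (metis min.cobounded1)

lemma exists_top_set:
  fixes f :: "nat \<Rightarrow> real"
  assumes "finite N" "m \<le> card N"
  shows "\<exists>B. B \<subseteq> N \<and> card B = m \<and> (\<forall>x\<in>B. \<forall>z\<in>N-B. f z \<le> f x)"
  using assms(2)
proof (induction m)
  case 0
  then show ?case by auto
next
  case (Suc m)
  then obtain B where B: "B \<subseteq> N" "card B = m" "\<forall>x\<in>B. \<forall>z\<in>N-B. f z \<le> f x" by auto
  have ne: "N - B \<noteq> {}" using B Suc.prems assms(1)
    by (metis Diff_eq_empty_iff card_mono not_less_eq_eq subset_antisym)
  have fin: "finite (N-B)" using assms(1) by simp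
  have "Max (f ` (N-B)) \<in> f ` (N-B)" using Max_in[of "f ` (N-B)"] fin ne by auto
  then obtain z where z: "z \<in> N-B" "f z = Max (f ` (N-B))" by auto
  have zmax: "\<forall>u\<in>N-B. f u \<le> f z" using z fin by simp
  have "card (insert z B) = Suc m" using B z assms(1) finite_subset by fastforce
  moreover have "insert z B \<subseteq> N" using B z by auto
  moreover have "\<forall>x\<in>insert z B. \<forall>u\<in>N - insert z B. f u \<le> f x" using B(3) zmax by auto
  ultimately show ?case by blast
qed

lemma avg_top:
  fixes f :: "nat \<Rightarrow> real"
  assumes fin: "finite B" and sub: "B' \<subseteq> B" and dom: "\<forall>x\<in>B'. \<forall>z\<in>B-B'. f z \<le> f x"
    and nn: "\<forall>x\<in>B. 0 \<le> f x"
  shows "real (card B') * sum f B \<le> real (card B) * sum f B'"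
proof (cases "B' = {}")
  case True
  then show ?thesis by simp
next
  case False
  have fin': "finite B'" using fin sub finite_subset by auto
  define \<mu> where "\<mu> = Min (f ` B')"
  have "\<mu> \<in> f ` B'" unfolding \<mu>_def using Min_in[of "f ` B'"] fin' False by auto
  then obtain z where z: "z \<in> B'" "f z = \<mu>" by auto
  have \<mu>0: "0 \<le> \<mu>" using z nn sub by auto
  have s1: "real (card B') * \<mu> \<le> sum f B'"
    by (rule sum_bounded_below) (simp add: \<mu>_def fin')
  have s2: "sum f (B - B') \<le> real (card (B-B')) * \<mu>"
    by (rule sum_bounded_above) (use dom z in auto)
  have cB: "real (card B) = real (card B') + real (card (B-B'))"
    using fin sub by (simp add: card_Diff_subset fin' card_mono)
  have sB: "sum f B = sum f B' + sum f (B-B')" using fin sub by (metis add.commute sum.subset_diff)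
  have "real (card B') * sum f (B-B') \<le> real (card B') * (real (card (B-B')) * \<mu>)"
    using s2 by (simp add: mult_left_mono)
  also have "\<dots> = real (card (B-B')) * (real (card B') * \<mu>)" by simp
  also have "\<dots> \<le> real (card (B-B')) * sum f B'" using s1 by (simp add: mult_left_mono)
  finally have "real (card B') * sum f (B-B') \<le> real (card (B-B')) * sum f B'" .
  then show ?thesis unfolding cB sB by (simp add: algebra_simps)
qed

lemma top_lower:
  fixes v :: "nat \<Rightarrow> real"
  assumes nn: "\<forall>x\<in>{1..n}. 0 \<le> v x" and supp: "card {x\<in>{1..n}. 0 < v x} \<le> k"
    and J: "J \<subseteq> {1..n}" "card J = j" and jl: "j \<le> l" and lk: "l < k" and ln: "l \<le> n"
  shows "sum v J + (real l - real j) / (real k - real j) * sum v ({1..n}-J) \<le> top_sum n l v"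
proof -
  define N where "N = {1..n::nat}"
  define S where "S = {x\<in>N. 0 < v x}"
  define A where "A = S \<inter> J"
  define B where "B = S - J"
  define c where "c = (real l - real j) / (real k - real j)"
  have finN: "finite N" by (simp add: N_def)
  have fS: "finite S" "finite A" "finite B" using finN by (auto simp: S_def A_def B_def)
  have AJ: "A \<subseteq> J" by (auto simp: A_def)
  have fJ: "finite J" using J(1) finite_subset by auto
  have a_le: "card A \<le> j" using card_mono[OF fJ AJ] J(2) by simp
  have SAB: "S = A \<union> B" "A \<inter> B = {}" by (auto simp: A_def B_def)
  have cS: "card S = card A + card B" using SAB fS by (simp add: card_Un_disjoint)
  have cSk: "card S \<le> k" using supp by (simp add: S_def N_def)
  have vJ: "sum v J = sum v A"
  proof -
    have "sum v J = sum v A + sum v (J - A)" using fJ AJ by (metis add.commute sum.subset_diff)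
    moreover have "sum v (J - A) = 0"
    proof (rule sum.neutral, intro ballI)
      fix x assume "x \<in> J - A"
      then have "x \<in> N" "x \<notin> S" using J(1) by (auto simp: A_def N_def)
      then have "0 \<le> v x" "\<not> 0 < v x" using nn by (auto simp: S_def N_def)
      then show "v x = 0" by simp
    qed
    ultimately show ?thesis by simp
  qed
  have vR: "sum v (N - J) = sum v B"
  proof -
    have BNJ: "B \<subseteq> N - J" by (auto simp: B_def S_def)
    have "sum v (N - J) = sum v B + sum v ((N - J) - B)" using finN BNJ
      by (metis add.commute finite_Diff sum.subset_diff)
    moreover have "sum v ((N - J) - B) = 0"
    proof (rule sum.neutral, intro ballI)
      fix x assume "x \<in> (N - J) - B"
      then have "x \<in> N" "x \<notin> S" by (auto simp: B_def)
      then have "0 \<le> v x" "\<not> 0 < v x" using nn by (auto simp: S_def N_def)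
      then show "v x = 0" by simp
    qed
    ultimately show ?thesis by simp
  qed
  have SN: "S \<subseteq> N" "A \<subseteq> N" "B \<subseteq> N" by (auto simp: S_def A_def B_def)
  have nnN: "\<forall>x\<in>N. 0 \<le> v x" using nn by (simp add: N_def)
  have vA0: "0 \<le> sum v A" "0 \<le> sum v B" using nnN SN by (meson subsetD sum_nonneg)+
  have c01: "0 \<le> c" "c \<le> 1" using jl lk by (auto simp: c_def divide_simps)
  have main: "sum v A + c * sum v B \<le> top_sum n l v"
  proof (cases "card B \<le> l - card A")
    case True
    have "sum v S \<le> top_sum n l v"
      by (rule top_sum_ge) (use nn SN True cS a_le jl in \<open>auto simp: N_def\<close>)
    moreover have "sum v S = sum v A + sum v B" using SAB fS by (simp add: sum.union_disjoint)
    moreover have "c * sum v B \<le> sum v B" using c01 vA0 by (simp add: mult_left_le_one_le)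
    ultimately show ?thesis by linarith
  next
    case False
    then obtain B' where B': "B' \<subseteq> B" "card B' = l - card A" "\<forall>x\<in>B'. \<forall>z\<in>B-B'. v z \<le> v x"
      using exists_top_set[OF fS(3), of "l - card A" v] by auto
    have avg: "real (card B') * sum v B \<le> real (card B) * sum v B'"
      by (rule avg_top[OF fS(3) B'(1) B'(3)]) (use nnN SN in auto)
    have fB': "finite B'" using B'(1) fS finite_subset by auto
    have AB': "A \<inter> B' = {}" using SAB B' by auto
    have "sum v (A \<union> B') \<le> top_sum n l v"
      by (rule top_sum_ge) (use nn SN B' AB' fB' fS a_le jl in \<open>auto simp: N_def card_Un_disjoint\<close>)
    moreover have "sum v (A \<union> B') = sum v A + sum v B'" using AB' fB' fS by (simp add: sum.union_disjoint)
    moreover have "c * sum v B \<le> sum v B'"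
    proof -
      have bpos: "0 < real (card B)" using False by simp
      have "c * real (card B) \<le> c * (real k - real (card A))" using cS cSk c01
        by (intro mult_left_mono) auto
      also have "\<dots> \<le> real l - real (card A)"
      proof -
        have kj: "0 < real k - real j" using jl lk by simp
        have "(real l - real j) * (real k - real (card A)) \<le> (real l - real (card A)) * (real k - real j)"
        proof -
          have "(real l - real j) * (real k - real (card A)) - (real l - real (card A)) * (real k - real j)
                = (real (card A) - real j) * (real k - real l)" by (simp add: algebra_simps)
          moreover have "(real (card A) - real j) * (real k - real l) \<le> 0"
            using a_le lk by (intro mult_nonpos_nonneg) auto
          ultimately show ?thesis by linarith
        qed
        then show ?thesis unfolding c_def using kj by (simp add: divide_simps)
      qed
      finally have cb: "c * real (card B) \<le> real (card B')" using B'(2) a_le jl by simp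
      have "c * sum v B * real (card B) = (c * real (card B)) * sum v B" by simp
      also have "\<dots> \<le> real (card B') * sum v B" using cb vA0 by (intro mult_right_mono) auto
      also have "\<dots> \<le> real (card B) * sum v B'" by (rule avg)
      finally have "c * sum v B * real (card B) \<le> sum v B' * real (card B)" by (simp add: mult.commute)
      then show ?thesis using bpos by simp
    qed
    ultimately show ?thesis by linarith
  qed
  then show ?thesis using vJ vR by (simp add: c_def N_def)
qed

lemma has_sum_finsum:
  fixes f :: "'a \<Rightarrow> 'b \<Rightarrow> real"
  assumes "finite A" "\<And>a. a \<in> A \<Longrightarrow> (f a has_sum s a) B"
  shows "((\<lambda>b. \<Sum>a\<in>A. f a b) has_sum sum s A) B"
  using assms
proof (induction A rule: finite_induct)
  case empty
  then show ?case by simp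
next
  case (insert x F)
  have "((\<lambda>b. f x b + (\<Sum>a\<in>F. f a b)) has_sum (s x + sum s F)) B"
    by (rule has_sum_add) (use insert in auto)
  then show ?case using insert by simp
qed

lemma converse_j:
  fixes p :: "nat \<Rightarrow> real"
  assumes ppos: "\<forall>x\<in>{1..n}. p x > 0" and psum: "(\<Sum>x\<in>{1..n}. p x) = 1"
    and ch: "is_channel n W" and fe: "feasible n k W"
    and J: "J \<subseteq> {1..n}" "card J = j" and jl: "j \<le> l" and lk: "l < k" and ln: "l \<le> n"
  shows "guess_err n l p W \<le> (1 - sum p J) * (1 - (real l - real j) / (real k - real j))"
proof -
  define N where "N = {1..n::nat}"
  define c where "c = (real l - real j) / (real k - real j)"
  define P where "P = out_prob n p W"
  define F where "F = (\<lambda>y. P y * (1 - top_sum n l (posterior n p W y)))"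
  define H where "H = (\<lambda>y. (1 - c) * (\<Sum>x\<in>N-J. p x * W x y))"
  have finN: "finite N" by (simp add: N_def)
  have c01: "0 \<le> c" "c \<le> 1" using jl lk by (auto simp: c_def divide_simps)
  have Wnn: "\<And>x y. x \<in> N \<Longrightarrow> 0 \<le> W x y" using ch by (simp add: is_channel_def N_def)
  have Whs: "\<And>x. x \<in> N \<Longrightarrow> ((\<lambda>y. W x y) has_sum 1) UNIV" using ch by (simp add: is_channel_def N_def)
  have pJ: "sum p (N - J) = 1 - sum p J"
    using psum J(1) finN by (simp add: N_def sum_diff)
  have Hhs: "(H has_sum ((1 - c) * (1 - sum p J))) UNIV"
  proof -
    have "((\<lambda>y. \<Sum>x\<in>N-J. p x * W x y) has_sum (\<Sum>x\<in>N-J. p x)) UNIV"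
    proof (rule has_sum_finsum)
      fix x assume "x \<in> N - J"
      then show "((\<lambda>y. p x * W x y) has_sum p x) UNIV"
        using has_sum_cmult_right[OF Whs, of x "p x"] by simp
    qed (simp add: finN)
    then show ?thesis unfolding H_def pJ by (rule has_sum_cmult_right)
  qed
  have Hnn: "\<And>y. 0 \<le> H y" unfolding H_def using c01 ppos Wnn
    by (intro mult_nonneg_nonneg sum_nonneg) (auto simp: N_def less_imp_le)
  have FH: "F y \<le> H y" if Py: "0 < P y" for y
  proof -
    define v where "v = posterior n p W y"
    have vx: "v x = p x * W x y / P y" for x by (simp add: v_def posterior_def P_def)
    have vnn: "\<forall>x\<in>{1..n}. 0 \<le> v x" using ppos Wnn Py by (auto simp: vx N_def less_imp_le)
    have supp: "{x\<in>{1..n}. 0 < v x} = {x\<in>{1..n}. 0 < W x y}"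
    proof -
      have "0 < v x \<longleftrightarrow> 0 < W x y" if "x \<in> {1..n}" for x
      proof -
        have "0 < p x" using ppos that by auto
        then show ?thesis using Py by (simp add: vx zero_less_divide_iff zero_less_mult_iff)
      qed
      then show ?thesis by auto
    qed
    have ck: "card {x\<in>{1..n}. 0 < v x} \<le> k" using fe supp by (simp add: feasible_def)
    have tl: "sum v J + c * sum v (N-J) \<le> top_sum n l v"
      using top_lower[OF vnn ck J jl lk ln] by (simp add: c_def N_def)
    have sv: "sum v A = (\<Sum>x\<in>A. p x * W x y) / P y" for A by (simp add: vx sum_divide_distrib)
    have Psplit: "P y = (\<Sum>x\<in>J. p x * W x y) + (\<Sum>x\<in>N-J. p x * W x y)"
      unfolding P_def out_prob_def using J(1) finN
      by (metis N_def add.commute sum.subset_diff)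
    have "(\<Sum>x\<in>J. p x * W x y) + c * (\<Sum>x\<in>N-J. p x * W x y) \<le> P y * top_sum n l v"
    proof -
      have "P y * (sum v J + c * sum v (N-J)) \<le> P y * top_sum n l v"
        using tl Py by (simp add: mult_left_mono)
      moreover have "P y * (sum v J + c * sum v (N-J)) =
          (\<Sum>x\<in>J. p x * W x y) + c * (\<Sum>x\<in>N-J. p x * W x y)"
        using Py by (simp add: sv algebra_simps)
      ultimately show ?thesis by simp
    qed
    then show ?thesis unfolding F_def H_def v_def[symmetric] using Psplit
      by (simp add: algebra_simps)
  qed
  show ?thesis
  proof (cases "F summable_on {y. 0 < P y}")
    case True
    have "infsum F {y. 0 < P y} \<le> infsum H UNIV"
      by (rule infsum_mono_neutral[OF True]) (use Hhs FH Hnn in \<open>auto simp: has_sum_iff\<close>)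
    also have "\<dots> = (1 - c) * (1 - sum p J)" using Hhs by (simp add: has_sum_iff)
    finally show ?thesis unfolding guess_err_def F_def P_def c_def by (simp add: mult.commute)
  next
    case False
    then have "infsum F {y. 0 < P y} = 0" by (rule infsum_not_exists)
    moreover have "0 \<le> (1 - sum p J) * (1 - c)"
    proof -
      have "sum p J \<le> sum p N" using J(1) finN ppos
        by (intro sum_mono2) (auto simp: N_def less_imp_le)
      then show ?thesis using c01 psum by (simp add: N_def)
    qed
    ultimately show ?thesis unfolding guess_err_def F_def P_def c_def by simp
  qed
qed



definition dsum :: "(real \<times> nat set) list \<Rightarrow> nat \<Rightarrow> real" where
  "dsum L x = sum_list (map (\<lambda>(w,B). if x \<in> B then w else 0) L)"

lemma decomp_aux:
  fixes r :: "nat \<Rightarrow> real"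
  assumes "\<mu> = card {x\<in>N. 0 < r x} + card {x\<in>N. 0 < r x \<and> r x < s}"
    and "finite N" "1 \<le> m" "\<forall>x\<in>N. 0 \<le> r x \<and> r x \<le> s" "sum r N = real m * s" "0 \<le> s"
  shows "\<exists>L. (\<forall>(w,B)\<in>set L. 0 \<le> w \<and> B \<subseteq> N \<and> card B = m) \<and> sum_list (map fst L) = s
             \<and> (\<forall>x\<in>N. r x = dsum L x)"
  using assms
proof (induction \<mu> arbitrary: r s rule: less_induct)
  case (less \<mu>)
  note fin = less.prems(2) and m1 = less.prems(3) and rb = less.prems(4) and rs = less.prems(5)
    and s0 = less.prems(6)
  show ?case
  proof (cases "s = 0")
    case True
    then have "\<forall>x\<in>N. r x = 0" using rb by force
    then show ?thesis using True by (intro exI[of _ "[]"]) (simp add: dsum_def)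
  next
    case False
    then have spos: "0 < s" using s0 by simp
    have "real m * s \<le> real (card N) * s"
      using rs sum_bounded_above[of N r s] rb by auto
    then have mN: "m \<le> card N" using spos by simp
    obtain B where B: "B \<subseteq> N" "card B = m" "\<forall>x\<in>B. \<forall>z\<in>N-B. r z \<le> r x"
      using exists_top_set[OF fin mN, of r] by blast
    have finB: "finite B" using B(1) fin finite_subset by auto
    have Bne: "B \<noteq> {}" using B(2) m1 by auto
    define a where "a = Min (r ` B)"
    have "a \<in> r ` B" unfolding a_def using finB Bne by simp
    then obtain x0 where x0: "x0 \<in> B" "r x0 = a" by auto
    have amin: "\<forall>x\<in>B. a \<le> r x" unfolding a_def using finB by simp
    have sumN: "sum r N = sum r B + sum r (N - B)" using fin B(1) by (metis add.commute sum.subset_diff)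
    have sB: "sum r B \<le> real m * s" using sum_bounded_above[of B r s] rb B by auto
    have sNB0: "0 \<le> sum r (N - B)" using rb by (intro sum_nonneg) auto
    have apos: "0 < a"
    proof (rule ccontr)
      assume "\<not> 0 < a"
      then have ra0: "r x0 = 0" using x0 rb B(1) by force
      then have out0: "\<forall>z\<in>N-B. r z = 0" using B(3) x0 rb by force
      have "sum r (N - B) = 0" using out0 by simp
      moreover have "sum r B = sum r (B - {x0}) + r x0" using finB x0
        by (simp add: sum.remove add.commute)
      moreover have "sum r (B - {x0}) \<le> real (card (B - {x0})) * s"
        using sum_bounded_above[of "B - {x0}" r s] rb B by auto
      moreover have "card (B - {x0}) = m - 1" using x0 finB B(2) by simp
      ultimately have "sum r N \<le> real (m - 1) * s" using sumN ra0 by simp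
      then show False using rs spos m1 by (simp add: of_nat_diff algebra_simps)
    qed
    define b where "b = (if N - B = {} then 0 else Max (r ` (N - B)))"
    have bge: "\<forall>z\<in>N-B. r z \<le> b" unfolding b_def using fin by auto
    have b0: "0 \<le> b"
    proof (cases "N - B = {}")
      case True then show ?thesis by (simp add: b_def)
    next
      case False
      then obtain z where "z \<in> N - B" by auto
      then have "r z \<le> b" "0 \<le> r z" using bge rb by auto
      then show ?thesis by linarith
    qed
    have bs: "b < s"
    proof (cases "N - B = {}")
      case True then show ?thesis using spos by (simp add: b_def)
    next
      case False
      have "b \<in> r ` (N - B)" unfolding b_def using False fin by simp
      then obtain z0 where z0: "z0 \<in> N - B" "r z0 = b" by auto
      show ?thesis
      proof (rule ccontr)
        assume "\<not> b < s"
        then have "r z0 = s" using z0 rb by force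
        then have allB: "\<forall>x\<in>B. r x = s" using B(3) z0 rb B(1) by force
        have "sum r B = real m * s" using allB B(2) by simp
        moreover have "s \<le> sum r (N - B)"
        proof -
          have "sum r (N - B) = r z0 + sum r (N - B - {z0})" using z0 fin by (simp add: sum.remove)
          moreover have "0 \<le> sum r (N - B - {z0})" using rb by (intro sum_nonneg) auto
          ultimately show ?thesis using \<open>r z0 = s\<close> by simp
        qed
        ultimately show False using sumN rs spos by linarith
      qed
    qed
    define t where "t = min a (s - b)"
    have tpos: "0 < t" using apos bs by (simp add: t_def)
    have ts: "t \<le> s" using bs b0 by (simp add: t_def)
    define r' where "r' = (\<lambda>x. if x \<in> B then r x - t else r x)"
    define s' where "s' = s - t"
    have rb': "\<forall>x\<in>N. 0 \<le> r' x \<and> r' x \<le> s'"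
    proof
      fix x assume xN: "x \<in> N"
      show "0 \<le> r' x \<and> r' x \<le> s'"
      proof (cases "x \<in> B")
        case True
        then show ?thesis using amin rb xN by (auto simp: r'_def s'_def t_def)
      next
        case False
        then have "r x \<le> b" "0 \<le> r x" using bge rb xN by auto
        moreover have "b \<le> s - t" by (simp add: t_def)
        ultimately show ?thesis using False by (simp add: r'_def s'_def)
      qed
    qed
    have rs': "sum r' N = real m * s'"
    proof -
      have "sum r' N = sum r' B + sum r' (N - B)" using fin B(1) by (metis add.commute sum.subset_diff)
      also have "sum r' B = sum r B - real m * t" using B(2) by (simp add: r'_def sum_subtractf)
      also have "sum r' (N - B) = sum r (N - B)" by (simp add: r'_def)
      finally show ?thesis using sumN rs by (simp add: s'_def algebra_simps)
    qed
    have s'0: "0 \<le> s'" using ts by (simp add: s'_def)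
    define \<mu>' where "\<mu>' = card {x\<in>N. 0 < r' x} + card {x\<in>N. 0 < r' x \<and> r' x < s'}"
    have sub1: "{x\<in>N. 0 < r' x} \<subseteq> {x\<in>N. 0 < r x}" using tpos by (auto simp: r'_def)
    have sub2: "{x\<in>N. 0 < r' x \<and> r' x < s'} \<subseteq> {x\<in>N. 0 < r x \<and> r x < s}"
      using tpos by (auto simp: r'_def s'_def)
    have lt: "\<mu>' < \<mu>"
    proof (cases "t = a")
      case True
      have "x0 \<notin> {x\<in>N. 0 < r' x}" using x0 True by (simp add: r'_def)
      moreover have "x0 \<in> {x\<in>N. 0 < r x}" using x0 apos B(1) by auto
      ultimately have "{x\<in>N. 0 < r' x} \<subset> {x\<in>N. 0 < r x}" using sub1 by blast
      then have "card {x\<in>N. 0 < r' x} < card {x\<in>N. 0 < r x}" using fin by (simp add: psubset_card_mono)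
      moreover have "card {x\<in>N. 0 < r' x \<and> r' x < s'} \<le> card {x\<in>N. 0 < r x \<and> r x < s}"
        using sub2 fin by (simp add: card_mono)
      ultimately show ?thesis unfolding \<mu>'_def less.prems(1) by linarith
    next
      case False
      then have tb: "t = s - b" "s - b < a" by (auto simp: t_def)
      have NBne: "N - B \<noteq> {}" using tb apos b_def by (auto simp: min_def) (smt (verit) amin x0(1) rb B(1) subsetD)
      have "b \<in> r ` (N - B)" unfolding b_def using NBne fin by simp
      then obtain z0 where z0: "z0 \<in> N - B" "r z0 = b" by auto
      have bpos: "0 < b" using tb amin x0 rb B(1) by force
      have "z0 \<in> {x\<in>N. 0 < r x \<and> r x < s}" using z0 bpos bs by auto
      moreover have "z0 \<notin> {x\<in>N. 0 < r' x \<and> r' x < s'}" using z0 tb by (simp add: r'_def s'_def)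
      ultimately have "{x\<in>N. 0 < r' x \<and> r' x < s'} \<subset> {x\<in>N. 0 < r x \<and> r x < s}" using sub2 by blast
      then have "card {x\<in>N. 0 < r' x \<and> r' x < s'} < card {x\<in>N. 0 < r x \<and> r x < s}"
        using fin by (simp add: psubset_card_mono)
      moreover have "card {x\<in>N. 0 < r' x} \<le> card {x\<in>N. 0 < r x}"
        using sub1 fin by (simp add: card_mono)
      ultimately show ?thesis unfolding \<mu>'_def less.prems(1) by linarith
    qed
    obtain L where L: "\<forall>(w,B)\<in>set L. 0 \<le> w \<and> B \<subseteq> N \<and> card B = m" "sum_list (map fst L) = s'"
      "\<forall>x\<in>N. r' x = dsum L x"
      using less.IH[OF lt \<mu>'_def fin m1 rb' rs' s'0] by blast
    show ?thesis
    proof (intro exI[of _ "(t, B) # L"] conjI)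
      show "\<forall>(w,B')\<in>set ((t, B) # L). 0 \<le> w \<and> B' \<subseteq> N \<and> card B' = m" using L(1) tpos B by auto
      show "sum_list (map fst ((t, B) # L)) = s" using L(2) by (simp add: s'_def)
      show "\<forall>x\<in>N. r x = dsum ((t, B) # L) x"
        using L(3) by (auto simp: dsum_def r'_def)
    qed
  qed
qed



lemma sl_nth: "sum_list (map f L) = (\<Sum>y<length L. f (L!y))"
  by (simp add: sum_list_sum_nth atLeast0LessThan)

lemma raise:
  fixes p :: "nat \<Rightarrow> real"
  assumes fin: "finite R" and cR: "m \<le> card R" and sp: "0 < s"
    and pb: "\<forall>x\<in>R. 0 \<le> p x \<and> p x \<le> s" and ps: "sum p R \<le> real m * s"
  shows "\<exists>r. (\<forall>x\<in>R. p x \<le> r x \<and> r x \<le> s) \<and> sum r R = real m * s"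
proof -
  define K where "K = real (card R)"
  have KR: "sum p R \<le> K * s" using sum_bounded_above[of R p s] pb by (auto simp: K_def)
  have mK: "real m \<le> K" using cR by (simp add: K_def)
  show ?thesis
  proof (cases "sum p R = K * s")
    case True
    then have "sum p R = real m * s" using ps mK sp
      by (smt (verit, best) mult_right_mono)
    then show ?thesis using pb by (intro exI[of _ p]) auto
  next
    case False
    then have lt: "sum p R < K * s" using KR by simp
    define lam where "lam = (real m * s - sum p R) / (K * s - sum p R)"
    have l0: "0 \<le> lam" using lt ps by (simp add: lam_def)
    have l1: "lam \<le> 1" using lt mK sp by (simp add: lam_def divide_simps mult_right_mono)
    define r where "r = (\<lambda>x. p x + lam * (s - p x))"
    have "sum r R = sum p R + lam * (K * s - sum p R)"
      by (simp add: r_def sum.distrib sum_distrib_left[symmetric] sum_subtractf K_def)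
    also have "\<dots> = real m * s" using lt by (simp add: lam_def)
    finally have "sum r R = real m * s" .
    moreover have "\<forall>x\<in>R. p x \<le> r x \<and> r x \<le> s"
    proof
      fix x assume "x \<in> R"
      then have "0 \<le> s - p x" using pb by simp
      then have "0 \<le> lam * (s - p x)" "lam * (s - p x) \<le> 1 * (s - p x)"
        using l0 l1 by (simp, intro mult_right_mono) auto
      then show "p x \<le> r x \<and> r x \<le> s" by (simp add: r_def)
    qed
    ultimately show ?thesis by blast
  qed
qed

lemma achieve:
  fixes p :: "nat \<Rightarrow> real"
  assumes ppos: "\<forall>x\<in>{1..n}. p x > 0" and psum: "(\<Sum>x\<in>{1..n}. p x) = 1"
    and J: "J \<subseteq> {1..n}" "card J = j" and jk: "j < k" and kn: "k < n" and jl: "j \<le> l"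
    and sp: "0 < s" and restb: "\<forall>x\<in>{1..n}-J. p x \<le> s"
    and restsum: "sum p ({1..n}-J) \<le> (real k - real j) * s"
    and Jb: "\<forall>i\<in>J. s \<le> p i"
  shows "\<exists>W. is_channel n W \<and> feasible n k W \<and>
             1 - sum p J - (real l - real j) * s \<le> guess_err n l p W"
proof -
  define N where "N = {1..n::nat}"
  define R where "R = N - J"
  define m where "m = k - j"
  have finN: "finite N" and finR: "finite R" by (auto simp: N_def R_def)
  have fJ: "finite J" using J(1) finite_subset by auto
  have m1: "1 \<le> m" using jk by (simp add: m_def)
  have rm: "real m = real k - real j" using jk by (simp add: m_def)
  have cR: "m \<le> card R" using J kn fJ by (simp add: R_def N_def card_Diff_subset m_def)
  obtain rt where rt: "\<forall>x\<in>R. p x \<le> rt x \<and> rt x \<le> s" "sum rt R = real m * s"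
    using raise[OF finR cR sp, of p] ppos restb restsum rm
    by (auto simp: R_def N_def less_imp_le)
  have rtpos: "\<And>x. x \<in> R \<Longrightarrow> 0 < rt x"
  proof -
    fix x assume xR: "x \<in> R"
    then have "0 < p x" using ppos by (auto simp: R_def N_def)
    moreover have "p x \<le> rt x" using rt xR by auto
    ultimately show "0 < rt x" by linarith
  qed
  obtain L where L: "\<forall>(w,B)\<in>set L. 0 \<le> w \<and> B \<subseteq> R \<and> card B = m" "sum_list (map fst L) = s"
      "\<forall>x\<in>R. rt x = dsum L x"
    using decomp_aux[OF refl finR m1, of rt s] rt sp rtpos by (auto simp: less_imp_le)
  define w where "w = (\<lambda>y. fst (L!y))"
  define B where "B = (\<lambda>y. snd (L!y))"
  define M where "M = length L"
  have wB: "\<And>y. y < M \<Longrightarrow> 0 \<le> w y \<and> B y \<subseteq> R \<and> card (B y) = m"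
  proof -
    fix y assume "y < M"
    then have "L!y \<in> set L" unfolding M_def by simp
    moreover have "\<forall>z\<in>set L. 0 \<le> fst z \<and> snd z \<subseteq> R \<and> card (snd z) = m"
      using L(1) by (simp add: case_prod_beta)
    ultimately show "0 \<le> w y \<and> B y \<subseteq> R \<and> card (B y) = m" unfolding w_def B_def by blast
  qed
  have wsum: "(\<Sum>y<M. w y) = s" using L(2) by (simp add: sl_nth w_def M_def)
  have dsumM: "\<And>x. dsum L x = (\<Sum>y<M. if x \<in> B y then w y else 0)"
    unfolding w_def B_def M_def dsum_def sl_nth by (simp add: case_prod_beta)
  define W where "W = (\<lambda>x y. if y < M then (if x \<in> J then w y / s else if x \<in> B y then w y / rt x else 0)
                               else (0::real))"
  have Wnn: "\<And>x y. x \<in> N \<Longrightarrow> 0 \<le> W x y"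
  proof -
    fix x y assume "x \<in> N"
    show "0 \<le> W x y"
      using wB[of y] sp rtpos[of x] \<open>x \<in> N\<close> unfolding W_def by (auto simp: R_def)
  qed
  have Wsum: "\<And>x. x \<in> N \<Longrightarrow> (\<Sum>y<M. W x y) = 1"
  proof -
    fix x assume xN: "x \<in> N"
    show "(\<Sum>y<M. W x y) = 1"
    proof (cases "x \<in> J")
      case True
      then have "(\<Sum>y<M. W x y) = (\<Sum>y<M. w y) / s" by (simp add: W_def sum_divide_distrib)
      then show ?thesis using wsum sp by simp
    next
      case False
      then have xR: "x \<in> R" using xN by (simp add: R_def)
      have "\<And>y. y \<in> {..<M} \<Longrightarrow> W x y = (if x \<in> B y then w y else 0) / rt x"
        using False by (simp add: W_def)
      then have "(\<Sum>y<M. W x y) = (\<Sum>y<M. (if x \<in> B y then w y else 0) / rt x)"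
        by (rule sum.cong[OF refl])
      also have "\<dots> = (\<Sum>y<M. if x \<in> B y then w y else 0) / rt x"
        by (rule sum_divide_distrib[symmetric])
      also have "\<dots> = rt x / rt x" using L(3) xR dsumM by simp
      finally show ?thesis using rtpos[OF xR] by simp
    qed
  qed
  have W0: "\<And>x y. M \<le> y \<Longrightarrow> W x y = 0" by (simp add: W_def)
  have Whs: "\<And>x. x \<in> N \<Longrightarrow> ((\<lambda>y. W x y) has_sum 1) UNIV"
  proof -
    fix x assume "x \<in> N"
    have "((\<lambda>y. W x y) has_sum 1) {..<M}" by (rule has_sum_finiteI) (simp_all add: Wsum[OF \<open>x \<in> N\<close>])
    moreover have "((\<lambda>y. W x y) has_sum 1) UNIV \<longleftrightarrow> ((\<lambda>y. W x y) has_sum 1) {..<M}"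
      by (rule has_sum_cong_neutral) (auto simp: W0)
    ultimately show "((\<lambda>y. W x y) has_sum 1) UNIV" by simp
  qed
  have chan: "is_channel n W" unfolding is_channel_def using Wnn Whs by (simp add: N_def)
  have fea: "feasible n k W" unfolding feasible_def
  proof
    fix y
    show "card {x\<in>{1..n}. W x y > 0} \<le> k"
    proof (cases "y < M")
      case True
      have "{x\<in>{1..n}. W x y > 0} \<subseteq> J \<union> B y"
      proof
        fix x assume x: "x \<in> {x\<in>{1..n}. W x y > 0}"
        show "x \<in> J \<union> B y"
        proof (rule ccontr)
          assume "x \<notin> J \<union> B y"
          then have "W x y = 0" by (simp add: W_def)
          then show False using x by simp
        qed
      qed
      moreover have "card (J \<union> B y) \<le> k"
      proof -
        have "finite (B y)" using wB[OF True] finR finite_subset by auto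
        then have "card (J \<union> B y) \<le> card J + card (B y)" by (simp add: card_Un_le)
        then show ?thesis using wB[OF True] J(2) jk by (simp add: m_def)
      qed
      moreover have "finite (J \<union> B y)" using fJ wB[OF True] finR finite_subset by auto
      ultimately show ?thesis by (meson card_mono order_trans)
    next
      case False
      then show ?thesis by (simp add: W_def)
    qed
  qed
  define P where "P = out_prob n p W"
  define S where "S = sum p J"
  have Pnn: "\<And>y. 0 \<le> P y" unfolding P_def out_prob_def using ppos Wnn
    by (intro sum_nonneg) (auto simp: N_def less_imp_le)
  have P0: "\<And>y. M \<le> y \<Longrightarrow> P y = 0" unfolding P_def out_prob_def by (simp add: W0)
  have Psum: "(\<Sum>y<M. P y) = 1"
  proof -
    have "(\<Sum>y<M. P y) = (\<Sum>x\<in>N. p x * (\<Sum>y<M. W x y))"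
      unfolding P_def out_prob_def N_def by (subst sum.swap) (simp add: sum_distrib_left)
    also have "\<dots> = (\<Sum>x\<in>N. p x)" using Wsum by simp
    finally show ?thesis using psum by (simp add: N_def)
  qed
  define Y where "Y = {y. 0 < P y}"
  have YM: "Y \<subseteq> {..<M}"
  proof
    fix y assume "y \<in> Y"
    then have "0 < P y" by (simp add: Y_def)
    then show "y \<in> {..<M}" using P0[of y] by (cases "M \<le> y") auto
  qed
  have finY: "finite Y" using YM finite_subset by auto
  define G where "G = (\<lambda>y. w y * (S / s + (real l - real j)))"
  have Gnn: "\<And>y. y < M \<Longrightarrow> 0 \<le> G y"
  proof -
    fix y assume "y < M"
    have "0 \<le> S" unfolding S_def using ppos J(1) by (intro sum_nonneg) (auto simp: less_imp_le)
    then show "0 \<le> G y" unfolding G_def using wB[OF \<open>y < M\<close>] sp jl by auto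
  qed
  have Gsum: "(\<Sum>y<M. G y) = S + (real l - real j) * s"
  proof -
    have "(\<Sum>y<M. G y) = (\<Sum>y<M. w y) * (S / s + (real l - real j))"
      unfolding G_def by (rule sum_distrib_right[symmetric])
    also have "\<dots> = S + (real l - real j) * s" using wsum sp by (simp add: field_simps)
    finally show ?thesis .
  qed
  have key: "P y * top_sum n l (posterior n p W y) \<le> G y" if yY: "y \<in> Y" for y
  proof -
    have Py: "0 < P y" using yY by (simp add: Y_def)
    have yM: "y < M" using yY YM by auto
    obtain T where T: "T \<subseteq> {1..n}" "card T \<le> l" "top_sum n l (posterior n p W y) = sum (posterior n p W y) T"
      using top_sum_le by blast
    have finT: "finite T" using T(1) finite_subset by auto
    define q where "q = (\<lambda>x. p x * W x y)"
    have "P y * top_sum n l (posterior n p W y) = sum q T"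
      using T(3) Py by (simp add: posterior_def q_def P_def sum_divide_distrib[symmetric])
    also have "sum q T = sum q (T \<inter> J) + sum q (T - J)" using finT by (simp add: sum.Int_Diff)
    also have "sum q (T \<inter> J) = sum p (T \<inter> J) * (w y / s)"
      using yM by (simp add: q_def W_def sum_distrib_right sum_divide_distrib)
    also have "sum q (T - J) \<le> real (card (T - J)) * w y"
    proof (rule sum_bounded_above)
      fix x assume x: "x \<in> T - J"
      then have xR: "x \<in> R" using T(1) by (auto simp: R_def N_def)
      show "q x \<le> w y"
      proof (cases "x \<in> B y")
        case True
        have "p x / rt x \<le> 1" using rt xR rtpos[OF xR] by simp
        then have "(p x / rt x) * w y \<le> 1 * w y" using wB[OF yM] by (intro mult_right_mono) auto
        then have "p x * (w y / rt x) \<le> w y" by simp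
        then show ?thesis using True x yM by (simp add: q_def W_def)
      next
        case False
        then show ?thesis using x yM wB[OF yM] by (simp add: q_def W_def)
      qed
    qed
    finally have A: "P y * top_sum n l (posterior n p W y)
        \<le> sum p (T \<inter> J) * (w y / s) + real (card (T - J)) * w y" by simp
    define a where "a = card (T \<inter> J)"
    have cT: "card T = a + card (T - J)" using finT unfolding a_def by (metis card_Int_Diff)
    have aj: "a \<le> j" unfolding a_def using J fJ by (metis card_mono inf_le2)
    have cJT: "card (J - T) = j - a" unfolding a_def using J fJ
      by (metis card_Diff_subset_Int finite_Int inf_commute)
    have SJ: "S = sum p (T \<inter> J) + sum p (J - T)" unfolding S_def using fJ
      by (metis inf_commute sum.Int_Diff)
    have JT: "real (j - a) * s \<le> sum p (J - T)"
      using sum_bounded_below[of "J - T" s p] Jb cJT by auto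
    have w0: "0 \<le> w y" using wB[OF yM] by simp
    have "sum p (T \<inter> J) * (w y / s) + real (card (T - J)) * w y
          \<le> (S - real (j - a) * s) * (w y / s) + (real l - real a) * w y"
    proof (intro add_mono mult_right_mono)
      show "sum p (T \<inter> J) \<le> S - real (j - a) * s" using SJ JT by simp
      show "real (card (T - J)) \<le> real l - real a" using cT T(2) by simp
    qed (use w0 sp in auto)
    also have "\<dots> = G y" unfolding G_def using sp aj
      by (simp add: field_simps of_nat_diff)
    finally show ?thesis using A by simp
  qed
  have "1 - (S + (real l - real j) * s) \<le> guess_err n l p W"
  proof -
    have e1: "guess_err n l p W = (\<Sum>y\<in>Y. P y) - (\<Sum>y\<in>Y. P y * top_sum n l (posterior n p W y))"
      unfolding guess_err_def P_def[symmetric] Y_def[symmetric] using finY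
      by (simp add: algebra_simps sum_subtractf)
    have e2: "(\<Sum>y\<in>Y. P y) = (\<Sum>y<M. P y)"
      by (rule sum.mono_neutral_left) (use YM Pnn in \<open>auto simp: Y_def order_less_le\<close>)
    have e3: "(\<Sum>y\<in>Y. P y * top_sum n l (posterior n p W y)) \<le> (\<Sum>y\<in>Y. G y)"
      by (rule sum_mono) (rule key)
    have e4: "(\<Sum>y\<in>Y. G y) \<le> (\<Sum>y<M. G y)"
      by (rule sum_mono2) (use YM Gnn in auto)
    show ?thesis using e1 e2 e3 e4 Psum Gsum by linarith
  qed
  then show ?thesis using chan fea by (auto simp: S_def)
qed



lemma alg1:
  fixes a mm S R x :: real
  assumes "1 \<le> a" "a < mm" "S + (R - x) * (a - 1) / (mm - 1) + x \<le> S + R * a / mm"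
  shows "x \<le> R / mm"
proof -
  have m1: "0 < mm - 1" "0 < mm" using assms by auto
  define u where "u = (R - x) * (a - 1) / (mm - 1)"
  define v where "v = R * a / mm"
  have uu: "u * (mm - 1) = (R - x) * (a - 1)" using m1 by (simp add: u_def)
  have vv: "v * mm = R * a" using m1 by (simp add: v_def)
  have h: "0 \<le> v - u - x" using assms(3) by (simp add: u_def v_def)
  have "mm * (mm - 1) * (v - u - x) = (mm - 1) * (v * mm) - mm * (u * (mm - 1)) - x * mm * (mm - 1)"
    by (simp add: algebra_simps)
  also have "\<dots> = (mm - a) * (R - x * mm)" unfolding uu vv by (simp add: algebra_simps)
  finally have eq: "mm * (mm - 1) * (v - u - x) = (mm - a) * (R - x * mm)" .
  have "0 \<le> mm * (mm - 1) * (v - u - x)" using m1 h by simp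
  then have "0 \<le> (mm - a) * (R - x * mm)" using eq by simp
  then have "0 \<le> R - x * mm" using assms(2) by (simp add: zero_le_mult_iff)
  then show ?thesis using m1 by (simp add: field_simps)
qed

lemma alg2:
  fixes a mm S R x :: real
  assumes "0 \<le> a" "a < mm" "S - x + (R + x) * (a + 1) / (mm + 1) \<le> S + R * a / mm"
  shows "R / mm \<le> x"
proof -
  have m1: "0 < mm + 1" "0 < mm" using assms by auto
  define u where "u = (R + x) * (a + 1) / (mm + 1)"
  define v where "v = R * a / mm"
  have uu: "u * (mm + 1) = (R + x) * (a + 1)" using m1 by (simp add: u_def)
  have vv: "v * mm = R * a" using m1 by (simp add: v_def)
  have h: "0 \<le> v - u + x" using assms(3) by (simp add: u_def v_def)
  have "mm * (mm + 1) * (v - u + x) = (mm + 1) * (v * mm) - mm * (u * (mm + 1)) + x * mm * (mm + 1)"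
    by (simp add: algebra_simps)
  also have "\<dots> = (mm - a) * (x * mm - R)" unfolding uu vv by (simp add: algebra_simps)
  finally have eq: "mm * (mm + 1) * (v - u + x) = (mm - a) * (x * mm - R)" .
  have "0 \<le> mm * (mm + 1) * (v - u + x)" using m1 h by simp
  then have "0 \<le> (mm - a) * (x * mm - R)" using eq by simp
  then have "0 \<le> x * mm - R" using assms(2) by (simp add: zero_le_mult_iff)
  then show ?thesis using m1 by (simp add: field_simps)
qed

lemma mono_f:
  fixes b d T1 T2 :: real
  assumes "0 \<le> b" "b \<le> d" "0 < d" "T1 \<le> T2"
  shows "T1 + (1 - T1) * b / d \<le> T2 + (1 - T2) * b / d"
proof -
  have c: "b / d \<le> 1" using assms by simp
  have "T1 + (1 - T1) * b / d = b / d + T1 * (1 - b / d)" using assms(3) by (simp add: field_simps)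
  also have "\<dots> \<le> b / d + T2 * (1 - b / d)" using c assms(4) by (simp add: mult_right_mono)
  also have "\<dots> = T2 + (1 - T2) * b / d" using assms(3) by (simp add: field_simps)
  finally show ?thesis .
qed

theorem corollary2:
  fixes n k l :: nat and p :: "nat \<Rightarrow> real"
  assumes "\<forall>x\<in>{1..n}. p x > 0" and "(\<Sum>x\<in>{1..n}. p x) = 1"
    and "0 < k" and "k < n" and "1 \<le> l" and "l < k"
  shows "(\<forall>W. is_channel n W \<and> feasible n k W \<longrightarrow> guess_err n l p W \<le> max_val n k l p)
       \<and> (\<exists>W. is_channel n W \<and> feasible n k W \<and> guess_err n l p W = max_val n k l p)"
proof -
  note ppos = assms(1) and psum = assms(2) and kn = assms(4) and l1 = assms(5) and lk = assms(6)
  define N where "N = {1..n::nat}"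
  define f where "f = (\<lambda>j. top_sum n j p + (1 - top_sum n j p) * (real l - real j) / (real k - real j))"
  have maxv: "max_val n k l p = 1 - Max (f ` {0..l})" by (simp add: max_val_def f_def)
  have finN: "finite N" by (simp add: N_def)
  have topset: "\<exists>J. J \<subseteq> N \<and> card J = j \<and> top_sum n j p = sum p J \<and> (\<forall>x\<in>J. \<forall>z\<in>N-J. p z \<le> p x)"
    if "j \<le> n" for j
    using top_sum_char[of n j p] that by (simp add: N_def min_def)
  have pnn: "\<forall>x\<in>{1..n}. 0 \<le> p x" using ppos by (simp add: less_imp_le)
  have conv: "guess_err n l p W \<le> 1 - f j" if W: "is_channel n W" "feasible n k W" and j: "j \<le> l" for W j
  proof -
    obtain J where J: "J \<subseteq> N" "card J = j" "top_sum n j p = sum p J" using topset[of j] j lk kn by auto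
    have "guess_err n l p W \<le> (1 - sum p J) * (1 - (real l - real j) / (real k - real j))"
      by (rule converse_j[OF ppos psum W J(1)[unfolded N_def] J(2) j lk]) (use lk kn in simp)
    also have "\<dots> = 1 - f j" unfolding f_def J(3) using j lk by (simp add: field_simps)
    finally show ?thesis .
  qed
  have fin: "finite (f ` {0..l})" "f ` {0..l} \<noteq> {}" by auto
  have "Max (f ` {0..l}) \<in> f ` {0..l}" using Max_in[OF fin] .
  then obtain j where j: "j \<in> {0..l}" "f j = Max (f ` {0..l})" by (metis imageE)
  have jmax: "\<And>i. i \<le> l \<Longrightarrow> f i \<le> f j" using j fin by simp
  have part1: "\<forall>W. is_channel n W \<and> feasible n k W \<longrightarrow> guess_err n l p W \<le> max_val n k l p"
  proof (intro allI impI)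
    fix W assume W: "is_channel n W \<and> feasible n k W"
    have "guess_err n l p W \<le> 1 - f j" by (rule conv) (use W j(1) in auto)
    then show "guess_err n l p W \<le> max_val n k l p" using maxv j by simp
  qed
  have jl: "j \<le> l" using j by simp
  obtain J where J: "J \<subseteq> N" "card J = j" "top_sum n j p = sum p J" "\<forall>x\<in>J. \<forall>z\<in>N-J. p z \<le> p x"
    using topset[of j] jl lk kn by auto
  define S where "S = sum p J"
  define R where "R = 1 - S"
  define mm where "mm = real k - real j"
  define a where "a = real l - real j"
  have mm0: "0 < mm" "a < mm" "0 \<le> a" using jl lk by (auto simp: mm_def a_def)
  have fJ: "finite J" using J(1) finN finite_subset by auto
  have RS: "sum p (N - J) = R" using J(1) finN psum by (simp add: R_def S_def N_def sum_diff)
  have fj: "f j = S + R * a / mm" by (simp add: f_def J(3) S_def R_def a_def mm_def)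
  have Rpos: "0 < R"
  proof -
    have "card J < card N" using J(2) jl lk kn by (simp add: N_def)
    have "N - J \<noteq> {}"
    proof
      assume "N - J = {}"
      then have "N \<subseteq> J" by auto
      then have "card N \<le> card J" using fJ by (rule card_mono[rotated])
      then show False using \<open>card J < card N\<close> by simp
    qed
    then obtain z where z: "z \<in> N - J" by auto
    have "0 < p z" using z ppos by (auto simp: N_def)
    moreover have "p z \<le> sum p (N - J)" using z finN pnn
      by (intro member_le_sum) (auto simp: N_def)
    ultimately show ?thesis using RS by simp
  qed
  have Jlow: "R / mm \<le> p i" if i: "i \<in> J" for i
  proof -
    have "0 < card J" using i fJ card_gt_0_iff by blast
    then have j0: "1 \<le> j" using J(2) by simp
    have "sum p (J - {i}) \<le> top_sum n (j - 1) p"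
      by (rule top_sum_ge) (use pnn J(1) J(2) fJ i in \<open>auto simp: N_def\<close>)
    moreover have "sum p (J - {i}) = S - p i" using fJ i by (simp add: S_def sum_diff1)
    ultimately have "S - p i \<le> top_sum n (j - 1) p" by simp
    moreover have e1: "real l - real (j - 1) = a + 1" "real k - real (j - 1) = mm + 1"
      using j0 by (simp_all add: a_def mm_def of_nat_diff)
    ultimately have "(S - p i) + (1 - (S - p i)) * (a + 1) / (mm + 1) \<le> f (j - 1)"
      unfolding f_def e1 using mono_f[of "a + 1" "mm + 1" "S - p i" "top_sum n (j - 1) p"] mm0
      by simp
    also have "\<dots> \<le> f j" using jmax[of "j - 1"] jl by simp
    finally have "S - p i + (R + p i) * (a + 1) / (mm + 1) \<le> S + R * a / mm"
      unfolding fj by (simp add: R_def algebra_simps)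
    then show ?thesis using alg2[OF mm0(3) mm0(2)] by simp
  qed
  have part2: "\<exists>W. is_channel n W \<and> feasible n k W \<and> max_val n k l p \<le> guess_err n l p W"
  proof (cases "j < l")
    case True
    define s where "s = R / mm"
    have sp: "0 < s" using Rpos mm0 by (simp add: s_def)
    have restb: "\<forall>x\<in>{1..n}-J. p x \<le> s"
    proof
      fix x assume x: "x \<in> {1..n} - J"
      have "S + p x \<le> top_sum n (j + 1) p"
      proof -
        have "sum p (insert x J) \<le> top_sum n (j + 1) p"
          by (rule top_sum_ge) (use pnn J(1) J(2) fJ x in \<open>auto simp: N_def\<close>)
        then show ?thesis using x fJ by (simp add: S_def)
      qed
      moreover have e1: "real l - real (j + 1) = a - 1" "real k - real (j + 1) = mm - 1"
        by (simp_all add: a_def mm_def)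
      moreover have a1: "1 \<le> a" using True by (simp add: a_def)
      ultimately have "(S + p x) + (1 - (S + p x)) * (a - 1) / (mm - 1) \<le> f (j + 1)"
        unfolding f_def e1 using mono_f[of "a - 1" "mm - 1" "S + p x" "top_sum n (j + 1) p"] mm0
        by simp
      also have "\<dots> \<le> f j" using jmax[of "j + 1"] True by simp
      finally have h: "(S + p x) + (1 - (S + p x)) * (a - 1) / (mm - 1) \<le> S + R * a / mm"
        unfolding fj .
      have e2: "1 - (S + p x) = R - p x" by (simp add: R_def)
      have "S + (R - p x) * (a - 1) / (mm - 1) + p x \<le> S + R * a / mm" using h unfolding e2 by linarith
      then show "p x \<le> s" unfolding s_def by (rule alg1[OF a1 mm0(2)])
    qed
    have restsum: "sum p ({1..n}-J) \<le> (real k - real j) * s"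
      using RS mm0 by (simp add: s_def mm_def N_def)
    have Jb: "\<forall>i\<in>J. s \<le> p i" using Jlow by (simp add: s_def)
    obtain W where W: "is_channel n W" "feasible n k W" "1 - sum p J - (real l - real j) * s \<le> guess_err n l p W"
      using achieve[OF ppos psum J(1)[unfolded N_def] J(2) _ kn jl sp restb restsum Jb] jl lk by auto
    have "max_val n k l p = 1 - f j" using maxv j(2) by simp
    also have "\<dots> = 1 - sum p J - (real l - real j) * s"
      unfolding fj s_def S_def[symmetric] a_def[symmetric] using mm0 by simp
    finally show ?thesis using W by auto
  next
    case False
    then have jl': "j = l" using jl by simp
    have Jne: "J \<noteq> {}" using J(2) jl' l1 by auto
    define s where "s = Min (p ` J)"
    have "s \<in> p ` J" unfolding s_def using fJ Jne by simp
    then obtain i0 where i0: "i0 \<in> J" "p i0 = s" by auto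
    have sp: "0 < s" using i0 J(1) ppos by (auto simp: N_def)
    have Jb: "\<forall>i\<in>J. s \<le> p i" unfolding s_def using fJ by simp
    have restb: "\<forall>x\<in>{1..n}-J. p x \<le> s" using J(4) i0 by (auto simp: N_def)
    have restsum: "sum p ({1..n}-J) \<le> (real k - real j) * s"
    proof -
      have "R / mm \<le> s" using Jlow[OF i0(1)] i0(2) by simp
      then have "R \<le> mm * s" using mm0(1) by (simp add: divide_le_eq mult.commute)
      then show ?thesis using RS by (simp add: N_def mm_def)
    qed
    obtain W where W: "is_channel n W" "feasible n k W" "1 - sum p J - (real l - real j) * s \<le> guess_err n l p W"
      using achieve[OF ppos psum J(1)[unfolded N_def] J(2) _ kn jl sp restb restsum Jb] jl lk by auto
    have a0: "a = 0" using jl' by (simp add: a_def)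
    have "max_val n k l p = 1 - f j" using maxv j(2) by simp
    also have "\<dots> = 1 - sum p J - (real l - real j) * s"
      unfolding fj S_def[symmetric] a_def[symmetric] a0 by simp
    finally show ?thesis using W by auto
  qed
  show ?thesis
  proof
    show "\<forall>W. is_channel n W \<and> feasible n k W \<longrightarrow> guess_err n l p W \<le> max_val n k l p" by (rule part1)
    show "\<exists>W. is_channel n W \<and> feasible n k W \<and> guess_err n l p W = max_val n k l p"
      using part1 part2 by (meson order_antisym)
  qed
qed

end
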